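(* Let $E\subseteq\mathbb{R}^d$ be a convex compact set with $0$ in its interior, and let $P=\{p_i:i\in\mathbb{I}\}$ be a trajectory set satisfying condition (C2). If $P+E=\bigcup_{i\in\mathbb{I}}\bigcup_{y\in p_i}(E+y)=\mathbb{R}^d$, then $\ell^-(P)\ge 1/\Delta_E$.
   Context: A trajectory is a set $\gamma(\mathbb{R})$ where $\gamma:\mathbb{R}\to\mathbb{R}^d$ is a curve whose restriction to every bounded interval is rectifiable; a trajectory set $P$ is a countable collection of trajectories (also identified with their union). $\mathcal{M}^P(a,x)$ is the total arc length of the trajectories of $P$ inside the closed ball $B_a^d(x)$; $\ell^-(P)=\liminf_{a\to\infty}\inf_{x\in\mathbb{R}^d}\mathcal{M}^P(a,x)/|B_a^d|$. Condition (C2): there is $\delta:\mathbb{R}^+\to\mathbb{R}^+$ with $\delta(a)=o(a^d)$ such that for every $x\in\mathbb{R}^d$ and every sufficiently large $a$ there is a rectifiable curve $\alpha:[0,1]\to\mathbb{R}^d$ with $\ell(\alpha)=\mathcal{M}^P(a,x)+\delta(a)$ and $P\cap B_a^d(x)\subseteq\alpha([0,1])$. For measurable $E$, $\Delta_E=\sup_{q\in\mathbb{R}^d\setminus\{0\}}|\mathcal{P}_{q^\perp}E|$, where $\mathcal{P}_{q^\perp}$ is the orthogonal projection onto the hyperplane $q^\perp=\{x:\langle x,q\rangle=0\}$ and $|\cdot|$ is $(d-1)$-dimensional volume. *)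

theory Defs
  imports "HOL-Analysis.Analysis" "HOL-Library.Landau_Symbols"
begin

definition curve_length :: "(real \<Rightarrow> 'a::euclidean_space) \<Rightarrow> real \<Rightarrow> real \<Rightarrow> ennreal" where
  "curve_length g a b =
     (SUP ts \<in> {ts. sorted ts \<and> set ts \<subseteq> {a..b}}.
        (\<Sum>i<length ts - 1. ennreal (dist (g (ts ! i)) (g (ts ! Suc i)))))"

definition is_trajectory :: "'a::euclidean_space set \<Rightarrow> bool" where
  "is_trajectory S \<longleftrightarrow> (\<exists>g::real \<Rightarrow> 'a. continuous_on UNIV g \<and>
      (\<forall>a b. a \<le> b \<longrightarrow> curve_length g a b < \<infinity>) \<and> S = range g)"

definition trajectory_set :: "'a::euclidean_space set set \<Rightarrow> bool" where
  "trajectory_set P \<longleftrightarrow> countable P \<and> (\<forall>p\<in>P. is_trajectory p)"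

(* one-dimensional Hausdorff measure (diameter normalisation, so H^1 = arc length) *)
definition hausdorff1 :: "'a::euclidean_space set \<Rightarrow> ennreal" where
  "hausdorff1 S = (SUP e \<in> {0<..}. INF C \<in> {C :: nat \<Rightarrow> 'a set.
        S \<subseteq> (\<Union>n. C n) \<and> (\<forall>n. bounded (C n) \<and> diameter (C n) \<le> e)}.
        (\<Sum>n. ennreal (diameter (C n))))"

definition traj_mass :: "'a::euclidean_space set set \<Rightarrow> real \<Rightarrow> 'a \<Rightarrow> ennreal" where
  "traj_mass P a x = hausdorff1 ((\<Union>P) \<inter> cball x a)"

definition lower_density :: "'a::euclidean_space set set \<Rightarrow> ennreal" where
  "lower_density P = Liminf at_top (\<lambda>a::real.
       INF x. traj_mass P a x / emeasure lebesgue (cball (0::'a) a))"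

definition cond_C2 :: "'a::euclidean_space set set \<Rightarrow> bool" where
  "cond_C2 P \<longleftrightarrow> (\<exists>\<delta>::real \<Rightarrow> real. (\<forall>a>0. \<delta> a > 0) \<and>
      \<delta> \<in> o[at_top](\<lambda>a. a ^ DIM('a)) \<and>
      (\<forall>\<^sub>F a in at_top. \<forall>x. \<exists>\<alpha>::real \<Rightarrow> 'a.
          continuous_on {0..1} \<alpha> \<and> curve_length \<alpha> 0 1 < \<infinity> \<and>
          curve_length \<alpha> 0 1 = traj_mass P a x + ennreal (\<delta> a) \<and>
          (\<Union>P) \<inter> cball x a \<subseteq> \<alpha> ` {0..1}))"

definition proj_perp :: "'a::euclidean_space \<Rightarrow> 'a \<Rightarrow> 'a" where
  "proj_perp q x = x - ((x \<bullet> q) / (q \<bullet> q)) *\<^sub>R q"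

(* (d-1)-dimensional volume of a subset S of the hyperplane q^\<perp>, computed as the
   d-dimensional Lebesgue measure of the unit-height right cylinder over S *)
definition hyperplane_volume :: "'a::euclidean_space \<Rightarrow> 'a set \<Rightarrow> ennreal" where
  "hyperplane_volume q S =
     emeasure lebesgue {y + t *\<^sub>R (q /\<^sub>R norm q) | y t. y \<in> S \<and> t \<in> {0..1}}"

definition Delta :: "'a::euclidean_space set \<Rightarrow> ennreal" where
  "Delta E = (SUP q \<in> UNIV - {0}. hyperplane_volume q (proj_perp q ` E))"

end

theory Submission
  imports Defs "HOL-Real_Asymp.Real_Asymp"
begin

definition Aset :: "'a::euclidean_space set \<Rightarrow> 'a \<Rightarrow> real \<Rightarrow> 'a set" where
  "Aset F u h = {s *\<^sub>R u + f | s f. s \<in> {0..h} \<and> f \<in> F}"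

lemma compact_Aset: "compact F \<Longrightarrow> compact (Aset F u h)"
proof -
  assume F: "compact F"
  have eq: "Aset F u h = {x + y | x y. x \<in> (\<lambda>s. s *\<^sub>R u) ` {0..h} \<and> y \<in> F}"
  proof (intro equalityI subsetI)
    fix z assume "z \<in> Aset F u h"
    then obtain s f where z: "z = s *\<^sub>R u + f" "s \<in> {0..h}" "f \<in> F" unfolding Aset_def by blast
    then show "z \<in> {x + y | x y. x \<in> (\<lambda>s. s *\<^sub>R u) ` {0..h} \<and> y \<in> F}" by blast
  next
    fix z assume "z \<in> {x + y | x y. x \<in> (\<lambda>s. s *\<^sub>R u) ` {0..h} \<and> y \<in> F}"
    then obtain s f where z: "z = s *\<^sub>R u + f" "s \<in> {0..h}" "f \<in> F" by blast
    then show "z \<in> Aset F u h" unfolding Aset_def by blast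
  qed
  have "compact ((\<lambda>s. s *\<^sub>R u) ` {0..h})"
    by (intro compact_continuous_image continuous_intros) auto
  from compact_sums[OF this F] show ?thesis unfolding eq .
qed

lemma Aset_add:
  assumes "a \<ge> 0" "b \<ge> 0"
  shows "Aset F u (a+b) = Aset F u a \<union> (+) (a *\<^sub>R u) ` Aset F u b"
proof
  show "Aset F u (a+b) \<subseteq> Aset F u a \<union> (+) (a *\<^sub>R u) ` Aset F u b"
  proof
    fix z assume "z \<in> Aset F u (a+b)"
    then obtain s f where z: "z = s *\<^sub>R u + f" "s \<in> {0..a+b}" "f \<in> F" by (auto simp: Aset_def)
    show "z \<in> Aset F u a \<union> (+) (a *\<^sub>R u) ` Aset F u b"
    proof (cases "s \<le> a")
      case True
      then show ?thesis using z by (auto simp: Aset_def)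
    next
      case False
      have "z = a *\<^sub>R u + ((s - a) *\<^sub>R u + f)" using z by (simp add: algebra_simps)
      moreover have "s - a \<in> {0..b}" using z False by auto
      then have "(s - a) *\<^sub>R u + f \<in> Aset F u b" using z unfolding Aset_def by blast
      ultimately show ?thesis by blast
    qed
  qed
next
  show "Aset F u a \<union> (+) (a *\<^sub>R u) ` Aset F u b \<subseteq> Aset F u (a+b)"
  proof
    fix z assume "z \<in> Aset F u a \<union> (+) (a *\<^sub>R u) ` Aset F u b"
    then show "z \<in> Aset F u (a+b)"
    proof
      assume "z \<in> Aset F u a"
      then obtain s f where z: "z = s *\<^sub>R u + f" "s \<in> {0..a}" "f \<in> F" unfolding Aset_def by blast
      moreover have "s \<in> {0..a+b}" using z assms by auto
      ultimately show ?thesis unfolding Aset_def by blast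
    next
      assume "z \<in> (+) (a *\<^sub>R u) ` Aset F u b"
      then obtain s f where z: "z = a *\<^sub>R u + (s *\<^sub>R u + f)" "s \<in> {0..b}" "f \<in> F"
        by (auto simp: Aset_def)
      have "z = (a + s) *\<^sub>R u + f" using z by (simp add: algebra_simps)
      moreover have "a + s \<in> {0..a+b}" using z assms by auto
      ultimately show ?thesis using z unfolding Aset_def by blast
    qed
  qed
qed

lemma Aset_int:
  assumes "convex F" "a \<ge> 0" "b \<ge> 0"
  shows "Aset F u a \<inter> (+) (a *\<^sub>R u) ` Aset F u b = (+) (a *\<^sub>R u) ` F"
proof
  show "Aset F u a \<inter> (+) (a *\<^sub>R u) ` Aset F u b \<subseteq> (+) (a *\<^sub>R u) ` F"
  proof
    fix z assume "z \<in> Aset F u a \<inter> (+) (a *\<^sub>R u) ` Aset F u b"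
    then obtain s1 f1 s2 f2 where z1: "z = s1 *\<^sub>R u + f1" "s1 \<in> {0..a}" "f1 \<in> F"
      and z2: "z = a *\<^sub>R u + (s2 *\<^sub>R u + f2)" "s2 \<in> {0..b}" "f2 \<in> F"
      by (auto simp: Aset_def)
    define p where "p = z - a *\<^sub>R u"
    define \<sigma>1 where "\<sigma>1 = a - s1"
    define \<sigma>2 where "\<sigma>2 = s2"
    have s1: "\<sigma>1 \<ge> 0" "\<sigma>2 \<ge> 0" using z1 z2 by (auto simp: \<sigma>1_def \<sigma>2_def)
    have f1: "f1 = p + \<sigma>1 *\<^sub>R u" using z1 by (simp add: p_def \<sigma>1_def algebra_simps)
    have f2: "f2 = p - \<sigma>2 *\<^sub>R u" using z2 by (simp add: p_def \<sigma>2_def algebra_simps)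
    have "p \<in> F"
    proof (cases "\<sigma>1 + \<sigma>2 = 0")
      case True
      then have "\<sigma>1 = 0" using s1 by linarith
      then show ?thesis using f1 z1 by simp
    next
      case False
      then have pos: "\<sigma>1 + \<sigma>2 > 0" using s1 by linarith
      have "(\<sigma>2 / (\<sigma>1 + \<sigma>2)) *\<^sub>R f1 + (\<sigma>1 / (\<sigma>1 + \<sigma>2)) *\<^sub>R f2 \<in> F"
      proof (rule convexD)
        show "\<sigma>2 / (\<sigma>1 + \<sigma>2) + \<sigma>1 / (\<sigma>1 + \<sigma>2) = 1"
          using pos by (simp add: add_divide_distrib[symmetric] add.commute)
      qed (use assms(1) z1(3) z2(3) s1 pos in auto)
      moreover have "(\<sigma>2 / (\<sigma>1 + \<sigma>2)) *\<^sub>R f1 + (\<sigma>1 / (\<sigma>1 + \<sigma>2)) *\<^sub>R f2 = p"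
      proof -
        have "(\<sigma>1 + \<sigma>2) *\<^sub>R ((\<sigma>2 / (\<sigma>1 + \<sigma>2)) *\<^sub>R f1 + (\<sigma>1 / (\<sigma>1 + \<sigma>2)) *\<^sub>R f2)
              = \<sigma>2 *\<^sub>R f1 + \<sigma>1 *\<^sub>R f2"
          using pos by (simp add: scaleR_add_right)
        also have "\<dots> = (\<sigma>1 + \<sigma>2) *\<^sub>R p" unfolding f1 f2 by (simp add: algebra_simps)
        finally show ?thesis using pos by simp
      qed
      ultimately show ?thesis by simp
    qed
    then show "z \<in> (+) (a *\<^sub>R u) ` F" unfolding p_def by (intro image_eqI[of _ _ "z - a *\<^sub>R u"]) auto
  qed
next
  show "(+) (a *\<^sub>R u) ` F \<subseteq> Aset F u a \<inter> (+) (a *\<^sub>R u) ` Aset F u b"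
  proof
    fix z assume "z \<in> (+) (a *\<^sub>R u) ` F"
    then obtain f where z: "z = a *\<^sub>R u + f" "f \<in> F" by auto
    have "a \<in> {0..a}" using assms by auto
    then have "z \<in> Aset F u a" using z unfolding Aset_def by blast
    moreover have "f \<in> Aset F u b" using z assms unfolding Aset_def
      by (intro CollectI exI[of _ 0] exI[of _ f]) auto
    ultimately show "z \<in> Aset F u a \<inter> (+) (a *\<^sub>R u) ` Aset F u b" using z by blast
  qed
qed

lemma g_add:
  fixes F :: "'a::euclidean_space set"
  assumes "convex F" "compact F" "a \<ge> 0" "b \<ge> 0"
  shows "measure lebesgue (Aset F u (a+b)) - measure lebesgue F =
     (measure lebesgue (Aset F u a) - measure lebesgue F) + (measure lebesgue (Aset F u b) - measure lebesgue F)"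
proof -
  have c1: "compact (Aset F u a)" "compact (Aset F u b)" using compact_Aset assms by auto
  have c2: "compact ((+) (a *\<^sub>R u) ` Aset F u b)"
    by (intro compact_continuous_image continuous_intros c1)
  have "measure lebesgue (Aset F u (a+b)) = measure lebesgue (Aset F u a) + measure lebesgue ((+) (a *\<^sub>R u) ` Aset F u b)
     - measure lebesgue (Aset F u a \<inter> (+) (a *\<^sub>R u) ` Aset F u b)"
    unfolding Aset_add[OF assms(3,4)]
    by (intro measure_Un3 lmeasurable_compact c1 c2)
  also have "\<dots> = measure lebesgue (Aset F u a) + measure lebesgue (Aset F u b) - measure lebesgue F"
    unfolding Aset_int[OF assms(1,3,4)] measure_translation ..
  finally show ?thesis by simp
qed

lemma g_mult:
  fixes F :: "'a::euclidean_space set"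
  assumes "convex F" "compact F" "h \<ge> 0"
  shows "measure lebesgue (Aset F u (real n * h)) - measure lebesgue F =
     real n * (measure lebesgue (Aset F u h) - measure lebesgue F)"
proof (induction n)
  case 0
  have "Aset F u 0 = F" by (force simp: Aset_def)
  then show ?case by simp
next
  case (Suc n)
  have "real (Suc n) * h = h + real n * h" by (simp add: algebra_simps)
  have nh: "real n * h \<ge> 0" using assms(3) by simp
  have "measure lebesgue (Aset F u (real (Suc n) * h)) - measure lebesgue F =
     (measure lebesgue (Aset F u h) - measure lebesgue F) + (measure lebesgue (Aset F u (real n * h)) - measure lebesgue F)"
    unfolding \<open>real (Suc n) * h = h + real n * h\<close> by (rule g_add[OF assms(1,2,3) nh])
  also have "\<dots> = (measure lebesgue (Aset F u h) - measure lebesgue F) + real n * (measure lebesgue (Aset F u h) - measure lebesgue F)"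
    using Suc by simp
  also have "\<dots> = real (Suc n) * (measure lebesgue (Aset F u h) - measure lebesgue F)"
    by (simp only: of_nat_Suc ring_distribs mult_1_left)
  finally show ?case .
qed


definition cyl :: "'a::euclidean_space \<Rightarrow> 'a set \<Rightarrow> 'a set" where
  "cyl q S = {y + t *\<^sub>R (q /\<^sub>R norm q) | y t. y \<in> S \<and> t \<in> {0..1}}"

lemma hyperplane_volume_cyl: "hyperplane_volume q S = emeasure lebesgue (cyl q S)"
  by (simp add: hyperplane_volume_def cyl_def)

lemma compact_cyl: "compact S \<Longrightarrow> compact (cyl q S)"
proof -
  assume S: "compact S"
  have eq: "cyl q S = {x + y | x y. x \<in> S \<and> y \<in> (\<lambda>t. t *\<^sub>R (q /\<^sub>R norm q)) ` {0..1}}"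
  proof (intro equalityI subsetI)
    fix z assume "z \<in> cyl q S"
    then obtain y t where z: "z = y + t *\<^sub>R (q /\<^sub>R norm q)" "y \<in> S" "t \<in> {0..1}" unfolding cyl_def by blast
    then show "z \<in> {x + y | x y. x \<in> S \<and> y \<in> (\<lambda>t. t *\<^sub>R (q /\<^sub>R norm q)) ` {0..1}}" by blast
  next
    fix z assume "z \<in> {x + y | x y. x \<in> S \<and> y \<in> (\<lambda>t. t *\<^sub>R (q /\<^sub>R norm q)) ` {0..1}}"
    then obtain y t where z: "z = y + t *\<^sub>R (q /\<^sub>R norm q)" "y \<in> S" "t \<in> {0..1}" by blast
    then show "z \<in> cyl q S" unfolding cyl_def by blast
  qed
  have "compact ((\<lambda>t. t *\<^sub>R (q /\<^sub>R norm q)) ` {0..1})"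
    by (intro compact_continuous_image continuous_intros) auto
  from compact_sums[OF S this] show ?thesis unfolding eq .
qed

lemma Aset_cyl_bound:
  fixes F :: "'a::euclidean_space set"
  assumes "compact F" "norm u = 1" "F \<subseteq> cball 0 R" "H \<ge> 0" "R \<ge> 0"
  shows "measure lebesgue (Aset F u H) \<le> (H + 2*R + 1) * measure lebesgue (cyl u (proj_perp u ` F))"
proof -
  define C where "C = cyl u (proj_perp u ` F)"
  define N where "N = nat \<lfloor>H + 2*R\<rfloor> + 1"
  have uu: "u \<bullet> u = 1" using assms(2) by (simp add: power2_norm_eq_inner[symmetric])
  have un: "u /\<^sub>R norm u = u" using assms(2) by simp
  have cC: "compact C" unfolding C_def
    by (intro compact_cyl compact_continuous_image assms(1)) (insert assms(2), auto simp: proj_perp_def intro!: continuous_intros)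
  have sub: "Aset F u H \<subseteq> (\<Union>k<N. (+) ((real k - R) *\<^sub>R u) ` C)"
  proof
    fix z assume "z \<in> Aset F u H"
    then obtain s f where z: "z = s *\<^sub>R u + f" "s \<in> {0..H}" "f \<in> F" unfolding Aset_def by blast
    define \<tau> where "\<tau> = s + f \<bullet> u"
    have "\<bar>f \<bullet> u\<bar> \<le> norm f * norm u" by (rule Cauchy_Schwarz_ineq2)
    moreover have "norm f \<le> R" using z(3) assms(3) by auto
    ultimately have fu: "\<bar>f \<bullet> u\<bar> \<le> R" using assms(2) by simp
    define k where "k = nat \<lfloor>\<tau> + R\<rfloor>"
    have t0: "\<tau> + R \<ge> 0" using fu z(2) unfolding \<tau>_def by auto
    have rk: "real k = \<lfloor>\<tau> + R\<rfloor>" unfolding k_def using t0 by simp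
    have k1: "real k \<le> \<tau> + R" "\<tau> + R < real k + 1" unfolding rk by linarith+
    have "\<tau> + R \<le> H + 2*R" using fu z(2) unfolding \<tau>_def by auto
    then have "\<lfloor>\<tau> + R\<rfloor> \<le> \<lfloor>H + 2*R\<rfloor>" by (rule floor_mono)
    then have kN: "k < N" unfolding N_def k_def by linarith
    have "proj_perp u f + (\<tau> + R - real k) *\<^sub>R (u /\<^sub>R norm u) \<in> C"
      unfolding C_def cyl_def using z(3) k1 by (intro CollectI exI conjI) auto
    moreover have "z = (real k - R) *\<^sub>R u + (proj_perp u f + (\<tau> + R - real k) *\<^sub>R (u /\<^sub>R norm u))"
      unfolding un proj_perp_def uu z(1) \<tau>_def by (simp add: algebra_simps)
    ultimately show "z \<in> (\<Union>k<N. (+) ((real k - R) *\<^sub>R u) ` C)" using kN by blast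
  qed
  have cU: "compact (\<Union>k<N. (+) ((real k - R) *\<^sub>R u) ` C)"
    by (intro compact_UN compact_continuous_image continuous_intros cC) auto
  have "measure lebesgue (Aset F u H) \<le> measure lebesgue (\<Union>k<N. (+) ((real k - R) *\<^sub>R u) ` C)"
    by (intro measure_mono_fmeasurable sub lmeasurable_compact cU fmeasurableD compact_Aset assms(1))
  also have "\<dots> \<le> (\<Sum>k<N. measure lebesgue ((+) ((real k - R) *\<^sub>R u) ` C))"
    by (intro measure_UNION_le fmeasurableD lmeasurable_compact compact_continuous_image continuous_intros cC) auto
  also have "\<dots> = real N * measure lebesgue C" unfolding measure_translation by simp
  also have "\<dots> \<le> (H + 2*R + 1) * measure lebesgue C"
  proof (rule mult_right_mono)
    have "real (nat \<lfloor>H + 2*R\<rfloor>) = \<lfloor>H + 2*R\<rfloor>" using assms(4,5) by simp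
    then show "real N \<le> H + 2*R + 1" unfolding N_def by linarith
  qed simp
  finally show ?thesis unfolding C_def .
qed


lemma arch_le:
  fixes x y c :: real
  assumes "\<And>n::nat. n \<ge> 1 \<Longrightarrow> x \<le> y + c / real n"
  shows "x \<le> y"
proof (rule ccontr)
  assume "\<not> x \<le> y"
  then have d: "x - y > 0" by simp
  obtain n :: nat where n: "real n > c / (x - y)" using reals_Archimedean2 by blast
  define m where "m = max n 1"
  have m1: "m \<ge> 1" unfolding m_def by simp
  have "real m > c / (x - y)" using n unfolding m_def by linarith
  then have "c < real m * (x - y)" using d by (simp add: divide_less_eq mult.commute)
  then have "c / real m < x - y" using m1 by (simp add: divide_less_eq mult.commute)
  with assms[OF m1] show False by linarith
qed

lemma seg_bound:
  fixes F :: "'a::euclidean_space set"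
  assumes "convex F" "compact F" "norm u = 1" "h \<ge> 0"
  shows "measure lebesgue (Aset F u h) - measure lebesgue F \<le> h * measure lebesgue (cyl u (proj_perp u ` F))"
proof -
  obtain R0 where R0: "\<forall>x\<in>F. norm x \<le> R0" using compact_imp_bounded[OF assms(2)] unfolding bounded_iff by blast
  define R where "R = max R0 0"
  have R: "R \<ge> 0" "F \<subseteq> cball 0 R" using R0 unfolding R_def by force+
  define V where "V = measure lebesgue (cyl u (proj_perp u ` F))"
  define g where "g = measure lebesgue (Aset F u h) - measure lebesgue F"
  show ?thesis unfolding g_def[symmetric] V_def[symmetric]
  proof (rule arch_le)
    fix n :: nat assume n: "n \<ge> 1"
    have nh: "real n * h \<ge> 0" using assms(4) by simp
    have "real n * g = measure lebesgue (Aset F u (real n * h)) - measure lebesgue F"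
      unfolding g_def using g_mult[OF assms(1,2,4)] by simp
    also have "\<dots> \<le> measure lebesgue (Aset F u (real n * h))" by simp
    also have "\<dots> \<le> (real n * h + 2*R + 1) * V"
      unfolding V_def by (rule Aset_cyl_bound[OF assms(2,3) R(2) nh R(1)])
    finally have "real n * g \<le> real n * (h * V) + (2*R+1) * V" by (simp add: algebra_simps)
    then have "g \<le> (real n * (h * V) + (2*R+1) * V) / real n" using n by (simp add: le_divide_eq mult.commute)
    also have "\<dots> = h * V + (2*R+1) * V / real n" using n by (simp add: add_divide_distrib)
    finally show "g \<le> h * V + (2*R+1) * V / real n" .
  qed
qed

lemma Delta_finite:
  fixes F :: "'a::euclidean_space set"
  assumes "compact F"
  shows "Delta F < \<infinity>"
proof -
  obtain R0 where R0: "\<forall>x\<in>F. norm x \<le> R0" using compact_imp_bounded[OF assms] unfolding bounded_iff by blast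
  define R where "R = max R0 0"
  have R: "R \<ge> 0" "\<And>f. f \<in> F \<Longrightarrow> norm f \<le> R" using R0 unfolding R_def by force+
  have "hyperplane_volume q (proj_perp q ` F) \<le> emeasure lebesgue (cball (0::'a) (2*R+1))" if q: "q \<noteq> 0" for q
  proof -
    have "cyl q (proj_perp q ` F) \<subseteq> cball 0 (2*R+1)"
    proof
      fix z assume "z \<in> cyl q (proj_perp q ` F)"
      then obtain f t where z: "z = proj_perp q f + t *\<^sub>R (q /\<^sub>R norm q)" "f \<in> F" "t \<in> {0..1}"
        unfolding cyl_def by blast
      have qq: "q \<bullet> q = norm q * norm q" by (simp add: power2_eq_square[symmetric] power2_norm_eq_inner)
      have "norm ((f \<bullet> q / (q \<bullet> q)) *\<^sub>R q) = \<bar>f \<bullet> q\<bar> / (norm q * norm q) * norm q"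
        unfolding qq by (simp add: abs_mult)
      also have "\<dots> = \<bar>f \<bullet> q\<bar> / norm q" using q by simp
      also have "\<dots> \<le> norm f * norm q / norm q" using q Cauchy_Schwarz_ineq2[of f q]
        by (intro divide_right_mono) auto
      also have "\<dots> \<le> R" using q R(2)[OF z(2)] by simp
      finally have a: "norm ((f \<bullet> q / (q \<bullet> q)) *\<^sub>R q) \<le> R" .
      have nq: "norm (q /\<^sub>R norm q) = 1" using q by (simp add: sgn_div_norm[symmetric] norm_sgn)
      have b: "norm (t *\<^sub>R (q /\<^sub>R norm q)) \<le> 1" unfolding norm_scaleR[of t] nq using z(3) by simp
      have "norm z \<le> norm f + norm ((f \<bullet> q / (q \<bullet> q)) *\<^sub>R q) + norm (t *\<^sub>R (q /\<^sub>R norm q))"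
        unfolding z(1) proj_perp_def by (meson norm_triangle_ineq norm_triangle_ineq4 add_mono order_trans order_refl)
      then show "z \<in> cball 0 (2*R+1)" using a b R(2)[OF z(2)] by simp
    qed
    then show ?thesis unfolding hyperplane_volume_cyl
      by (intro emeasure_mono) auto
  qed
  then have "Delta F \<le> emeasure lebesgue (cball (0::'a) (2*R+1))"
    unfolding Delta_def by (intro SUP_least) auto
  also have "\<dots> < \<infinity>" using lmeasurable_cball by (simp add: fmeasurable_def)
  finally show ?thesis .
qed

lemma cyl_le_Delta:
  fixes F :: "'a::euclidean_space set"
  assumes "compact F" "u \<noteq> 0"
  shows "measure lebesgue (cyl u (proj_perp u ` F)) \<le> enn2real (Delta F)"
proof -
  have cC: "compact (cyl u (proj_perp u ` F))"
    by (intro compact_cyl compact_continuous_image assms(1)) (insert assms(2), auto simp: proj_perp_def intro!: continuous_intros)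
  have "ennreal (measure lebesgue (cyl u (proj_perp u ` F))) = hyperplane_volume u (proj_perp u ` F)"
    unfolding hyperplane_volume_cyl by (rule emeasure_eq_measure2[symmetric]) (rule lmeasurable_compact[OF cC])
  also have "\<dots> \<le> Delta F" unfolding Delta_def using assms(2) by (intro SUP_upper) auto
  finally have "enn2real (ennreal (measure lebesgue (cyl u (proj_perp u ` F)))) \<le> enn2real (Delta F)"
    using Delta_finite[OF assms(1)] by (intro enn2real_mono) auto
  then show ?thesis by simp
qed


lemma trans_bound:
  fixes F :: "'a::euclidean_space set"
  assumes "convex F" "compact F"
  shows "measure lebesgue ((+) q ` F - (+) p ` F) \<le> norm (q - p) * enn2real (Delta F)"
proof (cases "q = p")
  case True
  then show ?thesis by simp
next
  case False
  define h where "h = norm (q - p)"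
  define u where "u = (q - p) /\<^sub>R h"
  have h: "h > 0" using False unfolding h_def by simp
  have hu: "h *\<^sub>R u = q - p" using h unfolding u_def by simp
  have nu: "norm u = 1" using h unfolding u_def h_def by simp
  define A where "A = (+) p ` Aset F u h"
  have cA: "compact A" unfolding A_def by (intro compact_continuous_image continuous_intros compact_Aset assms(2))
  have cpF: "compact ((+) p ` F)" "compact ((+) q ` F)" by (intro compact_continuous_image continuous_intros assms(2))+
  have sq: "(+) q ` F \<subseteq> A"
  proof
    fix z assume "z \<in> (+) q ` F"
    then obtain f where z: "z = q + f" "f \<in> F" by auto
    have "h *\<^sub>R u + f \<in> Aset F u h" using z(2) h unfolding Aset_def by (intro CollectI exI conjI) auto
    moreover have "z = p + (h *\<^sub>R u + f)" unfolding hu z(1) by simp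
    ultimately show "z \<in> A" unfolding A_def by blast
  qed
  have sp: "(+) p ` F \<subseteq> A"
  proof
    fix z assume "z \<in> (+) p ` F"
    then obtain f where z: "z = p + f" "f \<in> F" by auto
    have "0 *\<^sub>R u + f \<in> Aset F u h" using z(2) h unfolding Aset_def by (intro CollectI exI conjI) auto
    then show "z \<in> A" unfolding A_def z(1) by simp
  qed
  have "measure lebesgue ((+) q ` F - (+) p ` F) \<le> measure lebesgue (A - (+) p ` F)"
    using sq by (intro measure_mono_fmeasurable fmeasurable_Diff lmeasurable_compact cA fmeasurableD cpF) auto
  also have "\<dots> = measure lebesgue A - measure lebesgue ((+) p ` F)"
    by (intro measurable_measure_Diff lmeasurable_compact cA fmeasurableD cpF sp)
  also have "\<dots> = measure lebesgue (Aset F u h) - measure lebesgue F"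
    unfolding A_def measure_translation ..
  also have "\<dots> \<le> h * measure lebesgue (cyl u (proj_perp u ` F))"
    by (rule seg_bound[OF assms nu]) (use h in simp)
  also have "\<dots> \<le> h * enn2real (Delta F)"
    using h nu by (intro mult_left_mono cyl_le_Delta assms(2)) auto
  finally show ?thesis unfolding h_def .
qed

lemma union_bound:
  fixes F :: "'a::euclidean_space set"
  assumes "convex F" "compact F"
  shows "measure lebesgue (\<Union>i\<le>n. (+) (p i) ` F) \<le> measure lebesgue F + (\<Sum>i<n. norm (p (Suc i) - p i)) * enn2real (Delta F)"
proof (induction n)
  case 0
  then show ?case by (simp add: measure_translation)
next
  case (Suc n)
  have cp: "compact ((+) (p i) ` F)" for i by (intro compact_continuous_image continuous_intros assms(2))
  have eq: "(\<Union>i\<le>Suc n. (+) (p i) ` F) = (\<Union>i\<le>n. (+) (p i) ` F) \<union> ((+) (p (Suc n)) ` F - (+) (p n) ` F)"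
    by (auto simp: atMost_Suc)
  have "measure lebesgue (\<Union>i\<le>Suc n. (+) (p i) ` F) \<le> measure lebesgue (\<Union>i\<le>n. (+) (p i) ` F) + measure lebesgue ((+) (p (Suc n)) ` F - (+) (p n) ` F)"
    unfolding eq by (intro measure_Un_le sets.finite_UN sets.Diff fmeasurableD lmeasurable_compact cp) auto
  also have "\<dots> \<le> (measure lebesgue F + (\<Sum>i<n. norm (p (Suc i) - p i)) * enn2real (Delta F)) + norm (p (Suc n) - p n) * enn2real (Delta F)"
    by (intro add_mono Suc trans_bound assms)
  finally show ?case by (simp add: algebra_simps)
qed


lemma poly_le_length:
  fixes \<alpha> :: "real \<Rightarrow> 'a::euclidean_space"
  assumes "curve_length \<alpha> 0 1 \<le> ennreal L" "L \<ge> 0" "n \<ge> 1"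
  shows "(\<Sum>i<n. dist (\<alpha> (real i / real n)) (\<alpha> (real (Suc i) / real n))) \<le> L"
proof -
  define ts where "ts = map (\<lambda>i. real i / real n) [0..<Suc n]"
  have len: "length ts - 1 = n" unfolding ts_def by simp
  have nth: "i \<le> n \<Longrightarrow> ts ! i = real i / real n" for i unfolding ts_def
    by (simp add: nth_map del: upt_Suc)
  have "sorted ts" unfolding ts_def sorted_map
    by (intro sorted_wrt_mono_rel[OF _ sorted_upt]) (auto intro: divide_right_mono)
  moreover have "set ts \<subseteq> {0..1}" unfolding ts_def using assms(3) by auto
  ultimately have "ts \<in> {ts. sorted ts \<and> set ts \<subseteq> {0..1}}" by simp
  then have "(\<Sum>i<length ts - 1. ennreal (dist (\<alpha> (ts ! i)) (\<alpha> (ts ! Suc i)))) \<le> curve_length \<alpha> 0 1"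
    unfolding curve_length_def by (rule SUP_upper)
  also have "(\<Sum>i<length ts - 1. ennreal (dist (\<alpha> (ts ! i)) (\<alpha> (ts ! Suc i))))
      = ennreal (\<Sum>i<n. dist (\<alpha> (real i / real n)) (\<alpha> (real (Suc i) / real n)))"
    unfolding len by (subst sum_ennreal) (auto simp: nth intro!: sum.cong)
  finally have "ennreal (\<Sum>i<n. dist (\<alpha> (real i / real n)) (\<alpha> (real (Suc i) / real n))) \<le> ennreal L"
    using assms(1) by simp
  then show ?thesis using assms(2) by (simp add: ennreal_le_iff)
qed

lemma curve_bound:
  fixes \<alpha> :: "real \<Rightarrow> 'a::euclidean_space" and E :: "'a set"
  assumes E: "convex E" "compact E" and \<rho>: "\<rho> > 0" "cball 0 \<rho> \<subseteq> E" and \<eta>: "\<eta> > 0"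
    and \<alpha>: "continuous_on {0..1} \<alpha>" "curve_length \<alpha> 0 1 \<le> ennreal L" "L \<ge> 0"
  shows "measure lebesgue {\<alpha> t + e | t e. t \<in> {0..1} \<and> e \<in> E}
     \<le> (1+\<eta>)^DIM('a) * measure lebesgue E + (1+\<eta>)^(DIM('a) - 1) * L * enn2real (Delta E)"
proof -
  define c where "c = 1 + \<eta>"
  have c: "c > 0" "c \<ge> 1" using \<eta> unfolding c_def by auto
  define D where "D = enn2real (Delta E)"
  have D: "D \<ge> 0" unfolding D_def by simp
  have "uniformly_continuous_on {0..1} \<alpha>" using \<alpha>(1) compact_uniformly_continuous compact_Icc by blast
  then obtain d where d: "d > 0" "\<And>s t. s \<in> {0..1} \<Longrightarrow> t \<in> {0..1} \<Longrightarrow> dist t s < d \<Longrightarrow> dist (\<alpha> t) (\<alpha> s) < \<eta> * \<rho>"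
    unfolding uniformly_continuous_on_def using \<eta> \<rho> by (metis mult_pos_pos)
  obtain n0 :: nat where n0: "real n0 > 1 / d" using reals_Archimedean2 by blast
  define n where "n = max n0 1"
  have n: "n \<ge> 1" "1 / real n < d"
  proof -
    show "n \<ge> 1" unfolding n_def by simp
    have "real n > 1 / d" using n0 unfolding n_def by linarith
    then show "1 / real n < d" using d(1) \<open>n \<ge> 1\<close> by (simp add: divide_less_eq mult.commute)
  qed
  define x where "x i = \<alpha> (real i / real n)" for i
  define p where "p i = x i /\<^sub>R c" for i
  define U where "U = (\<Union>i\<le>n. (+) (p i) ` E)"
  have cU: "compact U" unfolding U_def by (intro compact_UN compact_continuous_image continuous_intros E) auto
  have ccU: "compact ((\<lambda>y. c *\<^sub>R y + 0) ` U)" by (intro compact_continuous_image continuous_intros cU)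
  define S where "S = {\<alpha> t + e | t e. t \<in> {0..1} \<and> e \<in> E}"
  have cS: "compact S"
  proof -
    have eq: "S = {y + e | y e. y \<in> \<alpha> ` {0..1} \<and> e \<in> E}" unfolding S_def by blast
    have "compact (\<alpha> ` {0..1})" by (intro compact_continuous_image \<alpha>(1)) simp
    from compact_sums[OF this E(2)] show ?thesis unfolding eq .
  qed
  have sub: "S \<subseteq> (\<lambda>y. c *\<^sub>R y + 0) ` U"
  proof
    fix z assume "z \<in> S"
    then obtain t e where z: "z = \<alpha> t + e" "t \<in> {0..1}" "e \<in> E" unfolding S_def by blast
    define i where "i = nat \<lfloor>t * real n\<rfloor>"
    have tn: "t * real n \<ge> 0" using z(2) by simp
    have ri: "real i = \<lfloor>t * real n\<rfloor>" unfolding i_def using tn by simp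
    have i1: "real i \<le> t * real n" "t * real n < real i + 1" unfolding ri by linarith+
    have "t * real n \<le> 1 * real n" using z(2) by (intro mult_right_mono) auto
    then have "\<lfloor>t * real n\<rfloor> \<le> int n" by linarith
    then have iN: "i \<le> n" unfolding i_def by linarith
    have s01: "real i / real n \<in> {0..1}" using iN n(1) by auto
    have "real i / real n \<le> t" using i1 n(1) by (simp add: divide_le_eq)
    then have "dist t (real i / real n) = t - real i / real n" by (simp add: dist_real_def)
    also have "\<dots> < 1 / real n"
    proof -
      have "t < (real i + 1) / real n" using i1 n(1) by (simp add: less_divide_eq)
      moreover have "(real i + 1) / real n = real i / real n + 1 / real n" by (simp add: add_divide_distrib)
      ultimately show ?thesis by linarith
    qed
    finally have "dist t (real i / real n) < d" using n(2) by linarith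
    then have w: "dist (\<alpha> t) (x i) < \<eta> * \<rho>" unfolding x_def using d(2)[OF s01 z(2)] by blast
    define w where "w = \<alpha> t - x i"
    have nw: "norm ((1/\<eta>) *\<^sub>R w) \<le> \<rho>" using w \<eta> unfolding w_def dist_norm
      by (simp add: divide_le_eq mult.commute)
    then have wE: "(1/\<eta>) *\<^sub>R w \<in> E" using \<rho>(2) by auto
    define e' where "e' = (1/c) *\<^sub>R e + (\<eta>/c) *\<^sub>R ((1/\<eta>) *\<^sub>R w)"
    have e'E: "e' \<in> E" unfolding e'_def
    proof (rule convexD[OF E(1) z(3) wE])
      show "1/c + \<eta>/c = 1" using c unfolding c_def by (simp add: add_divide_distrib[symmetric])
    qed (use c \<eta> in auto)
    have "c *\<^sub>R (p i + e') + 0 = x i + e + w" unfolding p_def e'_def using c \<eta>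
      by (simp add: scaleR_add_right)
    also have "\<dots> = z" unfolding w_def z(1) by simp
    finally have "z = c *\<^sub>R (p i + e') + 0" by simp
    moreover have "p i + e' \<in> U" unfolding U_def using iN e'E by blast
    ultimately show "z \<in> (\<lambda>y. c *\<^sub>R y + 0) ` U" by blast
  qed
  have "measure lebesgue S \<le> measure lebesgue ((\<lambda>y. c *\<^sub>R y + 0) ` U)"
    by (intro measure_mono_fmeasurable sub fmeasurableD lmeasurable_compact cS ccU)
  also have "\<dots> = c ^ DIM('a) * measure lebesgue U"
    using measure_lebesgue_affine[of c 0 U] c by simp
  also have "\<dots> \<le> c ^ DIM('a) * (measure lebesgue E + (\<Sum>i<n. norm (p (Suc i) - p i)) * D)"
    unfolding U_def D_def using c by (intro mult_left_mono union_bound E) auto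
  also have "(\<Sum>i<n. norm (p (Suc i) - p i)) = (1/c) * (\<Sum>i<n. dist (\<alpha> (real i / real n)) (\<alpha> (real (Suc i) / real n)))"
    unfolding sum_distrib_left
  proof (rule sum.cong)
    fix i assume "i \<in> {..<n}"
    have "p (Suc i) - p i = (1/c) *\<^sub>R (x (Suc i) - x i)" unfolding p_def by (simp add: scaleR_diff_right divide_inverse_commute)
    then show "norm (p (Suc i) - p i) = 1 / c * dist (\<alpha> (real i / real n)) (\<alpha> (real (Suc i) / real n))"
      using c unfolding x_def by (simp add: dist_norm norm_minus_commute)
  qed simp
  also have "c ^ DIM('a) * (measure lebesgue E + (1/c) * (\<Sum>i<n. dist (\<alpha> (real i / real n)) (\<alpha> (real (Suc i) / real n))) * D)
     \<le> c ^ DIM('a) * (measure lebesgue E + (1/c) * L * D)"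
    using c D poly_le_length[OF \<alpha>(2,3) n(1)]
    by (intro mult_left_mono add_left_mono mult_right_mono) auto
  also have "\<dots> = c ^ DIM('a) * measure lebesgue E + (c ^ DIM('a) / c) * L * D"
    by (simp add: algebra_simps)
  also have "c ^ DIM('a) / c = c ^ (DIM('a) - 1)"
    using c(1) DIM_positive[where 'a='a] by (simp add: power_diff)
  finally show ?thesis unfolding S_def c_def D_def .
qed


lemma emeasure_lebesgue_cball:
  fixes c :: "'a::euclidean_space"
  assumes "r \<ge> 0"
  shows "emeasure lebesgue (cball c r) = ennreal (unit_ball_vol (DIM('a)) * r ^ DIM('a))"
  using emeasure_cball[OF assms, of c] by simp

lemma measure_lebesgue_cball:
  fixes c :: "'a::euclidean_space"
  assumes "r \<ge> 0"
  shows "measure lebesgue (cball c r) = unit_ball_vol (DIM('a)) * r ^ DIM('a)"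
  using emeasure_lebesgue_cball[OF assms, of c] assms
  by (simp add: measure_def)

lemma asym:
  fixes \<delta> :: "real \<Rightarrow> real" and \<omega> K c1 \<theta> r :: real and d :: nat
  assumes "\<delta> \<in> o[at_top](\<lambda>a. a ^ d)" "d > 0" "\<theta> < 1" "\<omega> > 0"
  shows "\<forall>\<^sub>F a in at_top. \<omega> * (a - r) ^ d - K - c1 * \<delta> a > \<theta> * \<omega> * a ^ d"
proof -
  have l1: "((\<lambda>a::real. (a - r) / a) \<longlongrightarrow> 1) at_top" by real_asymp
  have pinf: "filterlim (\<lambda>a::real. a ^ d) at_infinity at_top"
    by (intro filterlim_at_top_imp_at_infinity filterlim_pow_at_top assms(2) filterlim_ident)
  have l2: "((\<lambda>a. K / a ^ d) \<longlongrightarrow> 0) at_top" by (intro tendsto_divide_0[OF tendsto_const pinf])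
  have l3: "((\<lambda>a. \<delta> a / a ^ d) \<longlongrightarrow> 0) at_top" by (rule smalloD_tendsto[OF assms(1)])
  have "((\<lambda>a. \<omega> * ((a - r) / a) ^ d - K / a ^ d - c1 * (\<delta> a / a ^ d)) \<longlongrightarrow> \<omega> * 1 ^ d - 0 - c1 * 0) at_top"
    by (intro tendsto_intros l1 l2 l3)
  then have "((\<lambda>a. \<omega> * ((a - r) / a) ^ d - K / a ^ d - c1 * (\<delta> a / a ^ d)) \<longlongrightarrow> \<omega>) at_top" by simp
  moreover have "\<theta> * \<omega> < \<omega>" using assms by simp
  ultimately have ev: "\<forall>\<^sub>F a in at_top. \<theta> * \<omega> < \<omega> * ((a - r) / a) ^ d - K / a ^ d - c1 * (\<delta> a / a ^ d)"
    by (rule order_tendstoD(1))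
  show ?thesis using ev eventually_gt_at_top[of 0]
  proof eventually_elim
    case (elim a)
    have ad: "a ^ d > 0" using elim by simp
    have "\<omega> * ((a - r) / a) ^ d - K / a ^ d - c1 * (\<delta> a / a ^ d) = (\<omega> * (a - r) ^ d - K - c1 * \<delta> a) / a ^ d"
      unfolding power_divide using ad by (simp only: diff_divide_distrib times_divide_eq_right)
    with elim(1) have "\<theta> * \<omega> < (\<omega> * (a - r) ^ d - K - c1 * \<delta> a) / a ^ d" by simp
    then show ?case using ad by (simp add: less_divide_eq)
  qed
qed

theorem proposition4p6:
  fixes E :: "'a::euclidean_space set" and P :: "'a set set"
  assumes "convex E" and "compact E" and "0 \<in> interior E"
    and "trajectory_set P" and "cond_C2 P"
    and "(\<Union>p\<in>P. \<Union>y\<in>p. (\<lambda>e. e + y) ` E) = UNIV"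
  shows "lower_density P \<ge> 1 / Delta E"
proof -
  note E = assms(1,2)
  obtain \<rho> where \<rho>: "\<rho> > 0" "cball 0 \<rho> \<subseteq> E" using assms(3) mem_interior_cball by blast
  obtain r0 where r0: "\<forall>x\<in>E. norm x \<le> r0" using compact_imp_bounded[OF assms(2)] unfolding bounded_iff by blast
  define r where "r = max r0 0"
  have r: "r \<ge> 0" "\<And>e. e \<in> E \<Longrightarrow> norm e \<le> r" using r0 unfolding r_def by force+
  obtain \<delta> :: "real \<Rightarrow> real" where \<delta>pos: "\<forall>a>0. \<delta> a > 0" and \<delta>o: "\<delta> \<in> o[at_top](\<lambda>a. a ^ DIM('a))"
    and C2: "\<forall>\<^sub>F a in at_top. \<forall>x. \<exists>\<alpha>::real \<Rightarrow> 'a.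
          continuous_on {0..1} \<alpha> \<and> curve_length \<alpha> 0 1 < \<infinity> \<and>
          curve_length \<alpha> 0 1 = traj_mass P a x + ennreal (\<delta> a) \<and>
          (\<Union>P) \<inter> cball x a \<subseteq> \<alpha> ` {0..1}"
    using assms(5) unfolding cond_C2_def by blast
  define D where "D = enn2real (Delta E)"
  have DE: "Delta E = ennreal D" unfolding D_def using Delta_finite[OF assms(2)] by (simp add: less_top)
  have D0: "D \<ge> 0" unfolding D_def by simp
  define d where "d = DIM('a)"
  have d0: "d > 0" unfolding d_def by simp
  define \<omega> where "\<omega> = unit_ball_vol (real d)"
  have \<omega>: "\<omega> > 0" unfolding \<omega>_def by simp
  show ?thesis unfolding lower_density_def le_Liminf_iff
  proof (intro allI impI)
    fix y assume y: "y < 1 / Delta E"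
    obtain z where z: "y < z" "z < 1 / Delta E" using dense[OF y] by blast
    then have "z \<noteq> \<infinity>" by auto
    then obtain y1 where y1: "z = ennreal y1" "y1 \<ge> 0" by (cases z) auto
    have \<theta>0: "y1 * D < 1"
    proof (cases "D = 0")
      case True then show ?thesis by simp
    next
      case False
      then have "D > 0" using D0 by simp
      then have "ennreal y1 < ennreal (1 / D)" using z(2) unfolding y1 DE
        by (metis divide_ennreal ennreal_1 zero_le_one)
      then have "y1 < 1 / D" using ennreal_less_iff[OF y1(2)] by blast
      then show ?thesis using \<open>D > 0\<close> by (simp add: less_divide_eq)
    qed
    have "((\<lambda>\<eta>. (1 + \<eta>) ^ (d - 1) * (y1 * D)) \<longlongrightarrow> (1 + 0) ^ (d - 1) * (y1 * D)) (at_right 0)"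
      by (intro tendsto_intros)
    then have "((\<lambda>\<eta>. (1 + \<eta>) ^ (d - 1) * (y1 * D)) \<longlongrightarrow> y1 * D) (at_right 0)" by simp
    then have "\<forall>\<^sub>F \<eta> in at_right 0. (1 + \<eta>) ^ (d - 1) * (y1 * D) < 1"
      using \<theta>0 by (rule order_tendstoD(2))
    moreover have "\<forall>\<^sub>F \<eta> in at_right (0::real). \<eta> > 0" by (simp add: eventually_at_right_less)
    ultimately have "\<forall>\<^sub>F \<eta> in at_right (0::real). \<eta> > 0 \<and> (1 + \<eta>) ^ (d - 1) * (y1 * D) < 1"
      by eventually_elim auto
    then obtain \<eta> where \<eta>: "\<eta> > 0" "(1 + \<eta>) ^ (d - 1) * (y1 * D) < 1"
      using eventually_happens' trivial_limit_at_right_real by blast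
    define K where "K = (1+\<eta>)^d * measure lebesgue E"
    define c1 where "c1 = (1+\<eta>)^(d-1) * D"
    have c1: "c1 \<ge> 0" unfolding c1_def using \<eta> D0 by simp
    have as: "\<forall>\<^sub>F a in at_top. \<omega> * (a - r) ^ d - K - c1 * \<delta> a > ((1 + \<eta>) ^ (d - 1) * (y1 * D)) * \<omega> * a ^ d"
      using asym[OF \<delta>o[folded d_def] d0 \<eta>(2) \<omega>] .
    show "\<forall>\<^sub>F a in at_top. y < (INF x. traj_mass P a x / emeasure lebesgue (cball (0::'a) a))"
      using as C2 eventually_gt_at_top[of r] eventually_gt_at_top[of 0]
    proof eventually_elim
      case (elim a)
      have ar: "a - r \<ge> 0" using elim(3) by simp
      have "ennreal y1 \<le> traj_mass P a x / emeasure lebesgue (cball (0::'a) a)" for x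
      proof -
        obtain \<alpha> :: "real \<Rightarrow> 'a" where \<alpha>: "continuous_on {0..1} \<alpha>" "curve_length \<alpha> 0 1 < \<infinity>"
          "curve_length \<alpha> 0 1 = traj_mass P a x + ennreal (\<delta> a)" "(\<Union>P) \<inter> cball x a \<subseteq> \<alpha> ` {0..1}"
          using elim(2) by blast
        have "traj_mass P a x < \<infinity>" using \<alpha>(2,3) by (simp add: less_top)
        then obtain T0 where T0: "traj_mass P a x = ennreal T0" "T0 \<ge> 0"
          by (cases "traj_mass P a x") auto
        have \<delta>a: "\<delta> a > 0" using \<delta>pos elim(4) by simp
        define L where "L = T0 + \<delta> a"
        have L: "curve_length \<alpha> 0 1 \<le> ennreal L" "L \<ge> 0"
          unfolding L_def \<alpha>(3) T0 using T0(2) \<delta>a by (simp_all add: ennreal_plus)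
        have cov: "cball x (a - r) \<subseteq> {\<alpha> t + e | t e. t \<in> {0..1} \<and> e \<in> E}"
        proof
          fix w assume w: "w \<in> cball x (a - r)"
          have "w \<in> (\<Union>p\<in>P. \<Union>y\<in>p. (\<lambda>e. e + y) ` E)" using assms(6) by simp
          then obtain p v e where pv: "p \<in> P" "v \<in> p" "e \<in> E" "w = e + v" by blast
          have "dist x v \<le> dist x w + dist w v" by (rule dist_triangle)
          also have "dist w v = norm e" unfolding pv(4) dist_norm by simp
          also have "dist x w + norm e \<le> (a - r) + r" using w r(2)[OF pv(3)] by (intro add_mono) auto
          finally have "v \<in> (\<Union>P) \<inter> cball x a" using pv by auto
          then obtain t where "t \<in> {0..1}" "v = \<alpha> t" using \<alpha>(4) by blast
          then show "w \<in> {\<alpha> t + e | t e. t \<in> {0..1} \<and> e \<in> E}" using pv by (auto simp: add.commute)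
        qed
        have cS: "compact {\<alpha> t + e | t e. t \<in> {0..1} \<and> e \<in> E}"
        proof -
          have eq: "{\<alpha> t + e | t e. t \<in> {0..1} \<and> e \<in> E} = {y + e | y e. y \<in> \<alpha> ` {0..1} \<and> e \<in> E}" by blast
          have "compact (\<alpha> ` {0..1})" by (intro compact_continuous_image \<alpha>(1)) simp
          from compact_sums[OF this E(2)] show ?thesis unfolding eq .
        qed
        have "\<omega> * (a - r) ^ d = measure lebesgue (cball x (a - r))"
          unfolding \<omega>_def d_def using measure_lebesgue_cball[OF ar, of x] by simp
        also have "\<dots> \<le> measure lebesgue {\<alpha> t + e | t e. t \<in> {0..1} \<and> e \<in> E}"
          by (intro measure_mono_fmeasurable cov fmeasurableD lmeasurable_compact cS) auto
        also have "\<dots> \<le> K + c1 * L"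
          using curve_bound[OF E \<rho> \<eta>(1) \<alpha>(1) L] unfolding K_def c1_def d_def D_def
          by (simp add: algebra_simps)
        finally have main: "\<omega> * (a - r) ^ d \<le> K + c1 * L" .
        have "c1 * (y1 * \<omega> * a ^ d) = ((1 + \<eta>) ^ (d - 1) * (y1 * D)) * \<omega> * a ^ d"
          unfolding c1_def by (simp add: algebra_simps)
        also have "\<dots> < \<omega> * (a - r) ^ d - K - c1 * \<delta> a" using elim(1) by simp
        also have "\<dots> \<le> c1 * T0" using main unfolding L_def by (simp add: algebra_simps)
        finally have "y1 * \<omega> * a ^ d < T0" using c1 by (simp add: mult_less_cancel_left)
        then have le: "y1 \<le> T0 / (\<omega> * a ^ d)" using \<omega> elim(4) by (simp add: le_divide_eq mult.commute mult.left_commute)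
        have em: "emeasure lebesgue (cball (0::'a) a) = ennreal (\<omega> * a ^ d)"
          unfolding \<omega>_def d_def using emeasure_lebesgue_cball[of a "0::'a"] elim(4) by simp
        have dv: "ennreal T0 / ennreal (\<omega> * a ^ d) = ennreal (T0 / (\<omega> * a ^ d))"
          using \<omega> elim(4) T0(2) by (intro divide_ennreal) auto
        have "traj_mass P a x / emeasure lebesgue (cball (0::'a) a) = ennreal (T0 / (\<omega> * a ^ d))"
          using dv em T0(1) by metis
        then show ?thesis using le by (simp add: ennreal_leI)
      qed
      then have "ennreal y1 \<le> (INF x. traj_mass P a x / emeasure lebesgue (cball (0::'a) a))"
        by (rule INF_greatest)
      then show ?case using z(1) y1(1) by simp
    qed
  qed
qed

end
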